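(* Let $\mathbf{x},\mathbf{z}\in B_2^n$. Let $\mathbf{a}$ be a random vector in $\mathbb{R}^n$ with i.i.d. mean-zero, variance-one, sub-gaussian entries (each distributed as $a$) whose sub-gaussian norm is bounded by $\kappa$, and let $\mathbf{g}$ be a vector of independent standard normal entries. Let $\theta:\mathbb{R}\to\mathbb{R}$ be a measurable function whose second and third derivatives exist and satisfy $\|\theta''\|_\infty\le\tau_2$ and $\|\theta'''\|_\infty\le\tau_3$. Then $$\big|\mathbb{E}\theta(\langle\mathbf{a},\mathbf{x}\rangle)\langle\mathbf{a},\mathbf{z}\rangle-\mathbb{E}\theta(\langle\mathbf{g},\mathbf{x}\rangle)\langle\mathbf{g},\mathbf{z}\rangle\big|\le C(\tau_2+\tau_3)\,\mathbb{E}a^4\,\|\mathbf{x}\|_\infty,$$ where $C>0$ is an absolute constant.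
   Context: The sub-gaussian norm of $a$ is $\sup_{q\ge1}q^{-1/2}(\mathbb{E}|a|^q)^{1/q}$. $B_2^n$ is the Euclidean unit ball. *)

theory Defs
  imports "HOL-Probability.Probability"
begin

definition std_gaussian :: "real measure" where
  "std_gaussian = density lborel std_normal_density"

definition subgaussian_norm_le :: "real measure \<Rightarrow> real \<Rightarrow> bool" where
  "subgaussian_norm_le D \<kappa> \<longleftrightarrow>
     (\<forall>q::real. q \<ge> 1 \<longrightarrow>
        integrable D (\<lambda>t. \<bar>t\<bar> powr q) \<and>
        q powr (-1/2) * (\<integral>t. \<bar>t\<bar> powr q \<partial>D) powr (1/q) \<le> \<kappa>)"

text \<open>Inner product and sup-norm of vectors in R^n, represented as nat \<Rightarrow> real on {..<n}.\<close>
definition inner_n :: "nat \<Rightarrow> (nat \<Rightarrow> real) \<Rightarrow> (nat \<Rightarrow> real) \<Rightarrow> real" where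
  "inner_n n u v = (\<Sum>i<n. u i * v i)"

definition linf_norm :: "nat \<Rightarrow> (nat \<Rightarrow> real) \<Rightarrow> real" where
  "linf_norm n x = Max (insert 0 ((\<lambda>i. \<bar>x i\<bar>) ` {..<n}))"

end

theory Submission
  imports Defs
begin


definition good :: "real measure \<Rightarrow> bool" where
  "good N \<longleftrightarrow> prob_space N \<and> sets N = sets borel \<and> integrable N (\<lambda>u. \<bar>u\<bar>^3)
     \<and> integrable N (\<lambda>u. u) \<and> integrable N (\<lambda>u. u^2) \<and> (\<integral>u. u \<partial>N) = 0 \<and> (\<integral>u. u^2 \<partial>N) = 1"

lemma gauss_prob: "prob_space std_gaussian"
  unfolding std_gaussian_def by (rule prob_space_normal_density) simp

lemma gauss_int: "integrable std_gaussian (\<lambda>u. \<bar>u\<bar>^k) \<and> integrable std_gaussian (\<lambda>u. u^k)"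
  unfolding std_gaussian_def
  by (subst (1 2) integrable_density) 
     (auto simp: normal_density_nonneg integrable_std_normal_moment_abs integrable_std_normal_moment)

lemma gauss_integral: "(\<integral>u. f u \<partial>std_gaussian) = (\<integral>u. std_normal_density u * f u \<partial>lborel)"
  if "f \<in> borel_measurable borel" for f :: "real \<Rightarrow> real"
  unfolding std_gaussian_def using that
  by (subst integral_density) (auto simp: normal_density_nonneg)

lemma gauss_good: "good std_gaussian"
proof -
  have 1: "(\<integral>u. u \<partial>std_gaussian) = 0"
    using gauss_integral[of "\<lambda>u. u"] integral_std_normal_moment_odd[of 0] by simp
  have 2: "(\<integral>u. u^2 \<partial>std_gaussian) = 1"
    using gauss_integral[of "\<lambda>u. u^2"] integral_std_normal_moment_even[of 1] by simp
  show ?thesis unfolding good_def using gauss_prob gauss_int[of 3] gauss_int[of 1] gauss_int[of 2] 1 2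
    by (auto simp: std_gaussian_def)
qed

lemma gauss_abs3: "(\<integral>u. \<bar>u\<bar>^3 \<partial>std_gaussian) \<le> 2"
proof -
  have "(\<integral>u. \<bar>u\<bar>^3 \<partial>std_gaussian) = sqrt (2/pi) * 2"
    using gauss_integral[of "\<lambda>u. \<bar>u\<bar>^3"] integral_std_normal_moment_abs_odd[of 1] by simp
  also have "sqrt (2/pi) \<le> 1" using pi_gt3 by (simp add: field_simps)
  finally show ?thesis by simp
qed

locale th =
  fixes \<theta> \<theta>1 \<theta>2 \<theta>3 :: "real \<Rightarrow> real" and \<tau>2 \<tau>3 :: real
  assumes th_meas[measurable]: "\<theta> \<in> borel_measurable borel"
  and d1: "\<And>t. (\<theta> has_real_derivative \<theta>1 t) (at t)"
  and d2: "\<And>t. (\<theta>1 has_real_derivative \<theta>2 t) (at t)"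
  and d3: "\<And>t. (\<theta>2 has_real_derivative \<theta>3 t) (at t)"
  and b2: "\<And>t. \<bar>\<theta>2 t\<bar> \<le> \<tau>2" and b3: "\<And>t. \<bar>\<theta>3 t\<bar> \<le> \<tau>3"
begin

lemma th1m[measurable]: "\<theta>1 \<in> borel_measurable borel"
  by (intro borel_measurable_continuous_onI continuous_at_imp_continuous_on ballI DERIV_isCont[OF d2])

lemma tay3: "\<bar>\<theta>(s+h) - (\<theta> s + \<theta>1 s*h + \<theta>2 s*h^2/2)\<bar> \<le> \<tau>3*\<bar>h\<bar>^3/6"
proof -
  define diff where "diff = (\<lambda>m h. case m of 0 \<Rightarrow> \<theta>(s+h) | Suc 0 \<Rightarrow> \<theta>1(s+h)
     | Suc (Suc 0) \<Rightarrow> \<theta>2(s+h) | _ \<Rightarrow> \<theta>3(s+h))"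
  have sh: "((\<lambda>h. f (s+h)) has_real_derivative f' (s+t)) (at t)"
    if "\<And>t. (f has_real_derivative f' t) (at t)" for f f' t
    using that[of "s+t"] DERIV_shift[of f "f' (s+t)" t s] by (simp add: add.commute)
  have "\<forall>m t. m < 3 \<and> \<bar>t\<bar> \<le> \<bar>h\<bar> \<longrightarrow> DERIV (diff m) t :> diff (Suc m) t"
  proof (intro allI impI)
    fix m :: nat and t assume "m < 3 \<and> \<bar>t\<bar> \<le> \<bar>h\<bar>"
    then have "m = 0 \<or> m = 1 \<or> m = 2" by auto
    then show "DERIV (diff m) t :> diff (Suc m) t"
      by (auto simp: diff_def numeral_2_eq_2 intro!: sh d1 d2 d3)
  qed
  from Maclaurin_bi_le[of diff "\<lambda>h. \<theta>(s+h)" 3 h, OF _ this]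
  obtain c where c: "\<theta>(s+h) = (\<Sum>m<3. diff m 0 / fact m * h ^ m) + diff 3 c / fact 3 * h ^ 3"
    by (auto simp: diff_def)
  have "(\<Sum>m<3. diff m 0 / fact m * h ^ m) = \<theta> s + \<theta>1 s*h + \<theta>2 s*h^2/2"
    by (simp add: eval_nat_numeral diff_def)
  moreover have "diff 3 c = \<theta>3 (s+c)" by (simp add: diff_def eval_nat_numeral)
  ultimately have "\<theta>(s+h) - (\<theta> s + \<theta>1 s*h + \<theta>2 s*h^2/2) = \<theta>3 (s+c) / 6 * h^3"
    using c by (simp add: eval_nat_numeral)
  also have "\<bar>\<dots>\<bar> \<le> \<tau>3*\<bar>h\<bar>^3/6" using b3[of "s+c"]
    by (simp add: abs_mult power_abs mult_right_mono)
  finally show ?thesis .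
qed

lemma tay2: "\<bar>\<theta>(s+h) - (\<theta> s + \<theta>1 s*h)\<bar> \<le> \<tau>2*h^2/2"
proof -
  define diff where "diff = (\<lambda>m h. case m of 0 \<Rightarrow> \<theta>(s+h) | Suc 0 \<Rightarrow> \<theta>1(s+h)
     | _ \<Rightarrow> \<theta>2(s+h))"
  have sh: "((\<lambda>h. f (s+h)) has_real_derivative f' (s+t)) (at t)"
    if "\<And>t. (f has_real_derivative f' t) (at t)" for f f' t
    using that[of "s+t"] DERIV_shift[of f "f' (s+t)" t s] by (simp add: add.commute)
  have "\<forall>m t. m < 2 \<and> \<bar>t\<bar> \<le> \<bar>h\<bar> \<longrightarrow> DERIV (diff m) t :> diff (Suc m) t"
  proof (intro allI impI)
    fix m :: nat and t assume "m < 2 \<and> \<bar>t\<bar> \<le> \<bar>h\<bar>"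
    then have "m = 0 \<or> m = 1" by auto
    then show "DERIV (diff m) t :> diff (Suc m) t"
      by (auto simp: diff_def numeral_2_eq_2 intro!: sh d1 d2 d3)
  qed
  from Maclaurin_bi_le[of diff "\<lambda>h. \<theta>(s+h)" 2 h, OF _ this]
  obtain c where c: "\<theta>(s+h) = (\<Sum>m<2. diff m 0 / fact m * h ^ m) + diff 2 c / fact 2 * h ^ 2"
    by (auto simp: diff_def)
  have "(\<Sum>m<2. diff m 0 / fact m * h ^ m) = \<theta> s + \<theta>1 s*h"
    by (simp add: eval_nat_numeral diff_def)
  moreover have "diff 2 c = \<theta>2 (s+c)" by (simp add: diff_def eval_nat_numeral)
  ultimately have "\<theta>(s+h) - (\<theta> s + \<theta>1 s*h) = \<theta>2 (s+c) / 2 * h^2"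
    using c by (simp add: eval_nat_numeral)
  also have "\<bar>\<dots>\<bar> \<le> \<tau>2*h^2/2" using b2[of "s+c"]
    by (simp add: abs_mult power_abs mult_right_mono)
  finally show ?thesis .
qed


lemma tau_nonneg: "0 \<le> \<tau>2" "0 \<le> \<tau>3"
  using b2[of 0] b3[of 0] by auto

lemma onedim:
  assumes g: "good N"
  shows "integrable N (\<lambda>u. \<theta>(s+u*x)*(t+u*z))"
    and "\<bar>(\<integral>u. \<theta>(s+u*x)*(t+u*z) \<partial>N) - (t*\<theta> s + t*\<theta>2 s*x^2/2 + z*\<theta>1 s*x)\<bar>
          \<le> (\<integral>u. \<bar>u\<bar>^3 \<partial>N)*(\<bar>t\<bar>*\<tau>3*\<bar>x\<bar>^3/6 + \<bar>z\<bar>*\<tau>2*x^2/2)"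
proof -
  interpret prob_space N using g by (simp add: good_def)
  have sN: "sets N = sets borel" and i3: "integrable N (\<lambda>u. \<bar>u\<bar>^3)"
    and i1: "integrable N (\<lambda>u. u)" and i2: "integrable N (\<lambda>u. u^2)"
    and e1: "(\<integral>u. u \<partial>N) = 0" and e2: "(\<integral>u. u^2 \<partial>N) = 1"
    using g by (auto simp: good_def)
  have mN: "measurable N borel = measurable borel borel" by (rule measurable_cong_sets[OF sN refl])
  define A where "A = t*\<theta> s"
  define B where "B = t*\<theta>1 s*x + z*\<theta> s"
  define C where "C = t*\<theta>2 s*x^2/2 + z*\<theta>1 s*x"
  define K where "K = \<bar>t\<bar>*\<tau>3*\<bar>x\<bar>^3/6 + \<bar>z\<bar>*\<tau>2*x^2/2"
  define R where "R u = \<theta>(s+u*x)*(t+u*z) - (A + B*u + C*u^2)" for u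
  have K0: "0 \<le> K" using tau_nonneg by (simp add: K_def)
  have Rb: "\<bar>R u\<bar> \<le> \<bar>u\<bar>^3 * K" for u
  proof -
    define r1 where "r1 = \<theta>(s+u*x) - (\<theta> s + \<theta>1 s*(u*x) + \<theta>2 s*(u*x)^2/2)"
    define r2 where "r2 = \<theta>(s+u*x) - (\<theta> s + \<theta>1 s*(u*x))"
    have eq: "R u = t*r1 + (z*u)*r2"
      by (simp add: R_def r1_def r2_def A_def B_def C_def algebra_simps power2_eq_square)
    have h1: "\<bar>r1\<bar> \<le> \<tau>3*\<bar>u*x\<bar>^3/6" unfolding r1_def by (rule tay3)
    have h2: "\<bar>r2\<bar> \<le> \<tau>2*(u*x)^2/2" unfolding r2_def by (rule tay2)
    have "\<bar>t*r1\<bar> \<le> \<bar>t\<bar>*(\<tau>3*\<bar>u*x\<bar>^3/6)" unfolding abs_mult[of t]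
      by (rule mult_left_mono[OF h1]) simp
    moreover have "\<bar>(z*u)*r2\<bar> \<le> \<bar>z*u\<bar>*(\<tau>2*(u*x)^2/2)" unfolding abs_mult[of "z*u"]
      by (rule mult_left_mono[OF h2]) simp
    ultimately have "\<bar>R u\<bar> \<le> \<bar>t\<bar>*(\<tau>3*\<bar>u*x\<bar>^3/6) + \<bar>z*u\<bar>*(\<tau>2*(u*x)^2/2)"
      unfolding eq by linarith
    also have "\<dots> = \<bar>u\<bar>^3 * K"
      by (simp add: K_def abs_mult power_mult_distrib algebra_simps power2_eq_square power3_eq_cube)
    finally show ?thesis .
  qed
  have Rm: "R \<in> borel_measurable N" unfolding mN R_def by measurable
  have iR: "integrable N R"
    by (rule Bochner_Integration.integrable_bound[OF integrable_mult_left[OF i3, of K] Rm])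
       (use Rb K0 in \<open>auto simp: abs_mult\<close>)
  have ip: "integrable N (\<lambda>u. A + B*u + C*u^2)" using i1 i2 by auto
  have eqf: "(\<lambda>u. \<theta>(s+u*x)*(t+u*z)) = (\<lambda>u. (A + B*u + C*u^2) + R u)"
    by (simp add: R_def fun_eq_iff)
  show "integrable N (\<lambda>u. \<theta>(s+u*x)*(t+u*z))" unfolding eqf using ip iR by auto
  have "(\<integral>u. \<theta>(s+u*x)*(t+u*z) \<partial>N) = (\<integral>u. A + B*u + C*u^2 \<partial>N) + (\<integral>u. R u \<partial>N)"
    unfolding eqf by (rule Bochner_Integration.integral_add[OF ip iR])
  also have "(\<integral>u. A + B*u + C*u^2 \<partial>N) = A + C"
    using i1 i2 e1 e2 by (simp add: prob_space)
  finally have eq: "(\<integral>u. \<theta>(s+u*x)*(t+u*z) \<partial>N) - (t*\<theta> s + t*\<theta>2 s*x^2/2 + z*\<theta>1 s*x) = (\<integral>u. R u \<partial>N)"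
    by (simp add: A_def C_def)
  have "\<bar>\<integral>u. R u \<partial>N\<bar> \<le> (\<integral>u. \<bar>u\<bar>^3 * K \<partial>N)"
    by (rule integral_abs_bound_integral[OF iR]) (use i3 Rb in auto)
  also have "\<dots> = (\<integral>u. \<bar>u\<bar>^3 \<partial>N) * K" by simp
  finally show "\<bar>(\<integral>u. \<theta>(s+u*x)*(t+u*z) \<partial>N) - (t*\<theta> s + t*\<theta>2 s*x^2/2 + z*\<theta>1 s*x)\<bar>
          \<le> (\<integral>u. \<bar>u\<bar>^3 \<partial>N)*(\<bar>t\<bar>*\<tau>3*\<bar>x\<bar>^3/6 + \<bar>z\<bar>*\<tau>2*x^2/2)"
    unfolding eq K_def .
qed

end


lemma cube2: "0 \<le> a \<Longrightarrow> 0 \<le> b \<Longrightarrow> (a+b)^3 \<le> 4*(a^3+b^3::real)"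
proof -
  assume "0 \<le> a" "0 \<le> b"
  have "4*(a^3+b^3) - (a+b)^3 = 3*(a+b)*(a-b)^2" by algebra
  moreover have "0 \<le> 3*(a+b)*(a-b)^2" using \<open>0\<le>a\<close> \<open>0\<le>b\<close> by simp
  ultimately show ?thesis by linarith
qed

lemma cube_sum: "finite I \<Longrightarrow> (\<forall>i\<in>I. 0 \<le> y i) \<Longrightarrow> (\<Sum>i\<in>I. y i)^3 \<le> 4^card I * (\<Sum>i\<in>I. y i^3::real)"
proof (induction I rule: finite_induct)
  case empty then show ?case by simp
next
  case (insert j F)
  have S0: "0 \<le> (\<Sum>i\<in>F. y i)" using insert by (simp add: sum_nonneg)
  have yj: "0 \<le> y j" using insert by simp
  have s3: "0 \<le> (\<Sum>i\<in>F. y i^3)" using insert by (simp add: sum_nonneg)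
  have "(\<Sum>i\<in>insert j F. y i)^3 = (y j + (\<Sum>i\<in>F. y i))^3" using insert by simp
  also have "\<dots> \<le> 4*(y j^3 + (\<Sum>i\<in>F. y i)^3)" by (rule cube2[OF yj S0])
  also have "\<dots> \<le> 4*(y j^3 + 4^card F * (\<Sum>i\<in>F. y i^3))" using insert by simp
  also have "\<dots> \<le> 4^card (insert j F) * (y j^3 + (\<Sum>i\<in>F. y i^3))"
  proof -
    have "(1::real) \<le> 4^card F" by simp
    then have "4 * y j^3 \<le> 4 * 4^card F * y j^3" using yj by (simp add: mult_right_mono)
    then show ?thesis using insert by (simp add: algebra_simps)
  qed
  also have "\<dots> = 4^card (insert j F) * (\<Sum>i\<in>insert j F. y i^3)" using insert by simp
  finally show ?case .
qed

lemma good_sets: "good N \<Longrightarrow> sets N = sets borel" by (simp add: good_def)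

lemma comp_meas: "i \<in> I \<Longrightarrow> good (M i) \<Longrightarrow> (\<lambda>a. a i) \<in> borel_measurable (PiM I M)"
proof -
  assume a: "i \<in> I" "good (M i)"
  have "measurable (PiM I M) (M i) = measurable (PiM I M) borel"
    by (rule measurable_cong_sets) (use a in \<open>simp_all add: good_sets\<close>)
  with measurable_component_singleton[OF a(1), of M] show ?thesis by simp
qed

lemma comp_meas': "i \<in> I \<Longrightarrow> good (M i) \<Longrightarrow> f \<in> borel_measurable borel \<Longrightarrow> (\<lambda>a. f (a i)) \<in> borel_measurable (PiM I M)"
proof -
  assume a: "i \<in> I" "good (M i)" "f \<in> borel_measurable borel"
  have "f \<circ> (\<lambda>a. a i) \<in> borel_measurable (PiM I M)"
    by (rule measurable_comp[OF comp_meas[of i I M, OF a(1,2)] a(3)])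
  then show ?thesis by (simp add: comp_def)
qed

lemma comp_int:
  fixes g :: "real \<Rightarrow> real"
  assumes "finite I" "j \<in> I" "\<And>i. good (M i)" "integrable (M j) g"
  shows "integrable (PiM I M) (\<lambda>a. g (a j))"
proof -
  interpret product_sigma_finite M
    using assms(3) by (auto simp: product_sigma_finite_def good_def intro: prob_space_imp_sigma_finite)
  define f where "f i = (if i = j then g else (\<lambda>_. 1::real))" for i
  have "integrable (PiM I M) (\<lambda>a. \<Prod>i\<in>I. f i (a i))"
  proof (rule product_integrable_prod[OF assms(1)])
    fix i assume "i \<in> I"
    interpret prob_space "M i" using assms(3) by (simp add: good_def)
    show "integrable (M i) (f i)" using assms(4) by (auto simp: f_def)
  qed
  moreover have "(\<Prod>i\<in>I. f i (a i)) = g (a j)" for a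
  proof -
    have "(\<Prod>i\<in>I. f i (a i)) = f j (a j) * (\<Prod>i\<in>I-{j}. f i (a i))"
      using assms(1,2) by (rule prod.remove)
    also have "(\<Prod>i\<in>I-{j}. f i (a i)) = 1" by (rule prod.neutral) (simp add: f_def)
    finally show ?thesis by (simp add: f_def)
  qed
  ultimately show ?thesis by simp
qed


context th begin

lemma theta_bound: "\<bar>\<theta> w\<bar> \<le> (\<bar>\<theta> 0\<bar> + \<bar>\<theta>1 0\<bar> + \<tau>2) * u^2" if "\<bar>w\<bar> \<le> u" "1 \<le> u"
proof -
  have "\<bar>\<theta>(0+w) - (\<theta> 0 + \<theta>1 0*w)\<bar> \<le> \<tau>2*w^2/2" by (rule tay2)
  then have h: "\<bar>\<theta> w - (\<theta> 0 + \<theta>1 0*w)\<bar> \<le> \<tau>2*w^2/2" by simp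
  have e: "\<bar>\<theta>1 0 * w\<bar> = \<bar>\<theta>1 0\<bar>*\<bar>w\<bar>" by (rule abs_mult)
  have "\<bar>\<theta> w\<bar> \<le> \<bar>\<theta> 0\<bar> + \<bar>\<theta>1 0\<bar>*\<bar>w\<bar> + \<tau>2*w^2/2" using h e by linarith
  moreover have "\<bar>w\<bar> \<le> u^2"
  proof -
    have "u*1 \<le> u*u" by (rule mult_left_mono) (use that in auto)
    then show ?thesis using that unfolding power2_eq_square by linarith
  qed
  moreover have "w^2 \<le> u^2" using that by (metis abs_ge_zero power2_abs power_mono)
  moreover have "1 \<le> u^2" using that by simp
  moreover note tau_nonneg
  ultimately have "\<bar>\<theta> w\<bar> \<le> \<bar>\<theta> 0\<bar>*u^2 + \<bar>\<theta>1 0\<bar>*u^2 + \<tau>2*u^2"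
  proof -
    assume a: "\<bar>\<theta> w\<bar> \<le> \<bar>\<theta> 0\<bar> + \<bar>\<theta>1 0\<bar>*\<bar>w\<bar> + \<tau>2*w^2/2" "\<bar>w\<bar> \<le> u^2" "w^2 \<le> u^2" "1 \<le> u^2"
       "0 \<le> \<tau>2" "0 \<le> \<tau>3"
    have "\<bar>\<theta> 0\<bar> \<le> \<bar>\<theta> 0\<bar>*u^2" using a(4) by (simp add: mult_left_mono[of 1 "u^2", simplified])
    moreover have "\<bar>\<theta>1 0\<bar>*\<bar>w\<bar> \<le> \<bar>\<theta>1 0\<bar>*u^2" using a(2) by (simp add: mult_left_mono)
    moreover have "\<tau>2*w^2 \<le> \<tau>2*u^2" using a(3,5) by (simp add: mult_left_mono)
    moreover have "0 \<le> \<tau>2*w^2" using a(5) by simp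
    ultimately show ?thesis using a(1) by linarith
  qed
  then show ?thesis by (simp add: algebra_simps)
qed

lemma lin_bound:
  fixes a x :: "'i \<Rightarrow> real"
  assumes "finite I"
  shows "\<bar>(\<Sum>i\<in>I. a i * x i)\<bar> \<le> (1 + (\<Sum>i\<in>I. \<bar>x i\<bar>)) * (\<Sum>i\<in>I. \<bar>a i\<bar>)"
proof -
  have "\<bar>(\<Sum>i\<in>I. a i * x i)\<bar> \<le> (\<Sum>i\<in>I. \<bar>a i * x i\<bar>)" by (rule sum_abs)
  also have "\<dots> \<le> (\<Sum>i\<in>I. \<bar>a i\<bar> * (1 + (\<Sum>i\<in>I. \<bar>x i\<bar>)))"
  proof (rule sum_mono)
    fix i assume "i \<in> I"
    then have "\<bar>x i\<bar> \<le> (\<Sum>i\<in>I. \<bar>x i\<bar>)" using assms by (intro member_le_sum) auto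
    then show "\<bar>a i * x i\<bar> \<le> \<bar>a i\<bar> * (1 + (\<Sum>i\<in>I. \<bar>x i\<bar>))"
      by (simp add: abs_mult mult_left_mono)
  qed
  also have "\<dots> = (1 + (\<Sum>i\<in>I. \<bar>x i\<bar>)) * (\<Sum>i\<in>I. \<bar>a i\<bar>)"
    by (simp add: sum_distrib_right mult.commute)
  finally show ?thesis .
qed

lemma int_h:
  fixes M :: "'i \<Rightarrow> real measure" and x z :: "'i \<Rightarrow> real"
  assumes fin: "finite I" and gM: "\<And>i. good (M i)"
  shows "integrable (PiM I M) (\<lambda>a. \<theta>(s + (\<Sum>i\<in>I. a i * x i)) * (t + (\<Sum>i\<in>I. a i * z i)))"
proof -
  have cm: "(\<lambda>a. a i) \<in> borel_measurable (PiM I M)" if "i \<in> I" for i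
    using comp_meas[OF that gM] .
  have Sx: "(\<lambda>a. s + (\<Sum>i\<in>I. a i * x i)) \<in> borel_measurable (PiM I M)"
    using cm by (intro borel_measurable_add borel_measurable_sum borel_measurable_times) auto
  have Sz: "(\<lambda>a. t + (\<Sum>i\<in>I. a i * z i)) \<in> borel_measurable (PiM I M)"
    using cm by (intro borel_measurable_add borel_measurable_sum borel_measurable_times) auto
  have th: "(\<lambda>a. \<theta>(s + (\<Sum>i\<in>I. a i * x i))) \<in> borel_measurable (PiM I M)"
    using measurable_comp[OF Sx th_meas] by (simp add: comp_def)
  have meas: "(\<lambda>a. \<theta>(s + (\<Sum>i\<in>I. a i * x i)) * (t + (\<Sum>i\<in>I. a i * z i))) \<in> borel_measurable (PiM I M)"
    using th Sz by (rule borel_measurable_times)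
  define ps where "ps = 1 + \<bar>s\<bar> + (1 + (\<Sum>i\<in>I. \<bar>x i\<bar>))"
  define pt where "pt = 1 + \<bar>t\<bar> + (1 + (\<Sum>i\<in>I. \<bar>z i\<bar>))"
  define c where "c = \<bar>\<theta> 0\<bar> + \<bar>\<theta>1 0\<bar> + \<tau>2"
  define K where "K = c * ps^2 * pt"
  have c0: "0 \<le> c" using tau_nonneg by (simp add: c_def)
  have ps1: "1 \<le> ps" and pt1: "1 \<le> pt" by (auto simp: ps_def pt_def sum_nonneg)
  have K0: "0 \<le> K" using c0 ps1 pt1 by (simp add: K_def)
  have bnd: "\<bar>\<theta>(s + (\<Sum>i\<in>I. a i * x i)) * (t + (\<Sum>i\<in>I. a i * z i))\<bar>
     \<le> K * (4*(1 + 4^card I * (\<Sum>i\<in>I. \<bar>a i\<bar>^3)))" for a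
  proof -
    define W where "W = (\<Sum>i\<in>I. \<bar>a i\<bar>)"
    have W0: "0 \<le> W" by (simp add: W_def sum_nonneg)
    define P where "P = 1 + W"
    have P1: "1 \<le> P" using W0 by (simp add: P_def)
    have hS: "\<bar>s + (\<Sum>i\<in>I. a i * x i)\<bar> \<le> ps * P"
    proof -
      have "\<bar>s + (\<Sum>i\<in>I. a i * x i)\<bar> \<le> \<bar>s\<bar> + (1 + (\<Sum>i\<in>I. \<bar>x i\<bar>)) * W"
        using lin_bound[OF fin, of a x] unfolding W_def by linarith
      also have "\<dots> \<le> ps * P" unfolding ps_def P_def using W0
        by (simp add: algebra_simps sum_nonneg)
      finally show ?thesis .
    qed
    have hT: "\<bar>t + (\<Sum>i\<in>I. a i * z i)\<bar> \<le> pt * P"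
    proof -
      have "\<bar>t + (\<Sum>i\<in>I. a i * z i)\<bar> \<le> \<bar>t\<bar> + (1 + (\<Sum>i\<in>I. \<bar>z i\<bar>)) * W"
        using lin_bound[OF fin, of a z] unfolding W_def by linarith
      also have "\<dots> \<le> pt * P" unfolding pt_def P_def using W0
        by (simp add: algebra_simps sum_nonneg)
      finally show ?thesis .
    qed
    have up: "1 \<le> ps * P" using ps1 P1 by (metis mult_mono' mult_1 zero_le_one order.trans)
    have t1: "\<bar>\<theta>(s + (\<Sum>i\<in>I. a i * x i))\<bar> \<le> c * (ps*P)^2"
      unfolding c_def by (rule theta_bound[OF hS up])
    have "\<bar>\<theta>(s + (\<Sum>i\<in>I. a i * x i)) * (t + (\<Sum>i\<in>I. a i * z i))\<bar> \<le> c * (ps*P)^2 * (pt*P)"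
      unfolding abs_mult by (rule mult_mono[OF t1 hT]) (use c0 in auto)
    also have "\<dots> = K * P^3" by (simp add: K_def power2_eq_square power3_eq_cube)
    also have "P^3 \<le> 4*(1 + W^3)" unfolding P_def using cube2[of 1 W] W0 by simp
    also have "W^3 \<le> 4^card I * (\<Sum>i\<in>I. \<bar>a i\<bar>^3)" unfolding W_def
      by (rule cube_sum[OF fin]) auto
    finally show ?thesis using K0 by (simp add: mult_left_mono)
  qed
  have ib: "integrable (PiM I M) (\<lambda>a. K * (4*(1 + 4^card I * (\<Sum>i\<in>I. \<bar>a i\<bar>^3))))"
  proof -
    interpret prob_space "PiM I M" by (rule prob_space_PiM) (use gM in \<open>simp add: good_def\<close>)
    have "integrable (PiM I M) (\<lambda>a. \<bar>a i\<bar>^3)" if "i \<in> I" for i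
      using comp_int[where g="\<lambda>u. \<bar>u\<bar>^3", OF fin that gM] gM[of i] by (simp add: good_def)
    then show ?thesis by auto
  qed
  show ?thesis
    by (rule Bochner_Integration.integrable_bound[OF ib meas], intro AE_I2)
       (use bnd K0 in \<open>auto simp: abs_mult sum_nonneg\<close>)
qed

end



lemma psf: "(\<And>i. good (M i)) \<Longrightarrow> product_sigma_finite M"
  by (auto simp: product_sigma_finite_def good_def intro: prob_space_imp_sigma_finite)

lemma split_PiM:
  fixes M :: "'i \<Rightarrow> real measure" and f :: "('i \<Rightarrow> real) \<Rightarrow> real"
  assumes gM: "\<And>i. good (M i)" and fin: "finite I" and jI: "j \<notin> I"
    and f: "integrable (PiM (insert j I) M) f"
  shows "(\<integral>a. f a \<partial>PiM (insert j I) M) = (\<integral>a. (\<integral>y. f (a(j:=y)) \<partial>M j) \<partial>PiM I M)"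
    and "(\<integral>a. f a \<partial>PiM (insert j I) M) = (\<integral>y. (\<integral>a. f (a(j:=y)) \<partial>PiM I M) \<partial>M j)"
    and "integrable (PiM I M) (\<lambda>a. \<integral>y. f (a(j:=y)) \<partial>M j)"
    and "integrable (M j) (\<lambda>y. \<integral>a. f (a(j:=y)) \<partial>PiM I M)"
proof -
  interpret product_sigma_finite M by (rule psf[OF gM])
  interpret I: finite_product_sigma_finite M I by standard fact
  have sfj: "sigma_finite_measure (M j)" using sigma_finite_measures .
  interpret J: sigma_finite_measure "M j" by (rule sfj)
  interpret P: pair_sigma_finite "M j" "PiM I M" ..
  have pr: "\<And>i. i \<in> I \<Longrightarrow> prob_space (M i)" "prob_space (M j)" using gM by (auto simp: good_def)
  have D: "distr (M j \<Otimes>\<^sub>M PiM I M) (PiM (insert j I) M) (\<lambda>(x, X). X(j := x)) = PiM (insert j I) M"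
    by (rule distr_pair_PiM_eq_PiM[of I M j, OF pr])
  have mp: "(\<lambda>(x, X). X(j := x)) \<in> measurable (M j \<Otimes>\<^sub>M PiM I M) (PiM (insert j I) M)"
    by measurable
  have fb: "f \<in> borel_measurable (PiM (insert j I) M)" using f by auto
  have "integrable (distr (M j \<Otimes>\<^sub>M PiM I M) (PiM (insert j I) M) (\<lambda>(x, X). X(j := x))) f"
    by (subst D) (rule f)
  then have fi: "integrable (M j \<Otimes>\<^sub>M PiM I M) (\<lambda>(y, a). f (a(j:=y)))"
    unfolding integrable_distr_eq[OF mp fb] by (simp add: case_prod_beta')
  have "(\<integral>a. f a \<partial>distr (M j \<Otimes>\<^sub>M PiM I M) (PiM (insert j I) M) (\<lambda>(x, X). X(j := x))) = (\<integral>p. (\<lambda>(y, a). f (a(j:=y))) p \<partial>(M j \<Otimes>\<^sub>M PiM I M))"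
    by (subst integral_distr[OF mp fb]) (simp add: case_prod_beta')
  then have eq: "(\<integral>a. f a \<partial>PiM (insert j I) M) = (\<integral>p. (\<lambda>(y, a). f (a(j:=y))) p \<partial>(M j \<Otimes>\<^sub>M PiM I M))"
    by (subst (asm) D)
  show "(\<integral>a. f a \<partial>PiM (insert j I) M) = (\<integral>a. (\<integral>y. f (a(j:=y)) \<partial>M j) \<partial>PiM I M)"
    unfolding eq using P.integral_snd[OF fi] by simp
  show "(\<integral>a. f a \<partial>PiM (insert j I) M) = (\<integral>y. (\<integral>a. f (a(j:=y)) \<partial>PiM I M) \<partial>M j)"
    unfolding eq using P.integral_fst[OF fi] by simp
  show "integrable (PiM I M) (\<lambda>a. \<integral>y. f (a(j:=y)) \<partial>M j)"
    using P.integrable_snd[OF fi] by simp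
  show "integrable (M j) (\<lambda>y. \<integral>a. f (a(j:=y)) \<partial>PiM I M)"
    using P.integrable_fst[OF fi] by simp
qed


interpretation idth: th "\<lambda>w. w" "\<lambda>_. 1" "\<lambda>_. 0" "\<lambda>_. 0" 0 0
  by standard (auto intro: derivative_eq_intros)

interpretation oneth: th "\<lambda>_. 1" "\<lambda>_. 0" "\<lambda>_. 0" "\<lambda>_. 0" 0 0
  by standard (auto intro: derivative_eq_intros)

lemma inner_upd: "inner_n (Suc n) (a(n:=y)) z = inner_n n a z + y * z n"
  unfolding inner_n_def by (simp add: sum.lessThan_Suc)

lemma sqrt_le: "0 \<le> v \<Longrightarrow> 0 < q \<Longrightarrow> sqrt v \<le> (v + q^2)/(2*q)"
proof -
  assume v: "0 \<le> v" and q: "0 < q"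
  have "0 \<le> (sqrt v - q)^2" by simp
  then have "2*q*(sqrt v) \<le> v + q^2" using v by (simp add: power2_eq_square algebra_simps)
  then show ?thesis using q by (simp add: field_simps)
qed

lemma good_prob: "good N \<Longrightarrow> prob_space N" by (simp add: good_def)

lemma sq_int:
  assumes "good N"
  shows "integrable N (\<lambda>y. (w + y*c)^2)" "(\<integral>y. (w + y*c)^2 \<partial>N) = w^2 + c^2"
proof -
  interpret prob_space N using assms by (simp add: good_def)
  have i1: "integrable N (\<lambda>u. u)" and i2: "integrable N (\<lambda>u. u^2)"
    and e1: "(\<integral>u. u \<partial>N) = 0" and e2: "(\<integral>u. u^2 \<partial>N) = 1"
    using assms by (auto simp: good_def)
  have eq: "(\<lambda>y. (w + y*c)^2) = (\<lambda>y. w^2 + (2*w*c)*y + c^2 * y^2)"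
    by (simp add: fun_eq_iff power2_eq_square algebra_simps)
  show "integrable N (\<lambda>y. (w + y*c)^2)" unfolding eq using i1 i2 by auto
  show "(\<integral>y. (w + y*c)^2 \<partial>N) = w^2 + c^2" unfolding eq using i1 i2 e1 e2 by (simp add: prob_space)
qed

lemma int_sq: "good N \<Longrightarrow> integrable (PiM {..<n} (\<lambda>_. N)) (\<lambda>a. (t + inner_n n a z)^2)"
  using idth.int_h[where I="{..<n}" and M="\<lambda>_. N" and s=t and x=z and t=t and z=z] by (simp add: inner_n_def power2_eq_square)

lemma int_abs: "good N \<Longrightarrow> integrable (PiM {..<n} (\<lambda>_. N)) (\<lambda>a. \<bar>t + inner_n n a z\<bar>)"
  using oneth.int_h[where I="{..<n}" and M="\<lambda>_. N" and t=t and z=z] by (simp add: inner_n_def)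

lemma var_lin:
  assumes g: "good N"
  shows "(\<integral>a. (t + inner_n n a z)^2 \<partial>PiM {..<n} (\<lambda>_. N)) = t^2 + (\<Sum>j<n. z j^2)"
proof (induction n arbitrary: t)
  case 0
  interpret prob_space "PiM {} (\<lambda>_. N)" by (rule prob_space_PiM) (use g in \<open>simp add: good_def\<close>)
  show ?case by (simp add: inner_n_def prob_space)
next
  case (Suc n)
  have gM: "\<And>i. good ((\<lambda>_. N) i)" using g by simp
  interpret prob_space "PiM {..<n} (\<lambda>_. N)" by (rule prob_space_PiM) (use g in \<open>simp add: good_def\<close>)
  have "(\<integral>a. (t + inner_n (Suc n) a z)^2 \<partial>PiM {..<Suc n} (\<lambda>_. N))
      = (\<integral>a. (t + inner_n (Suc n) a z)^2 \<partial>PiM (insert n {..<n}) (\<lambda>_. N))"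
    by (simp add: lessThan_Suc)
  also have "\<dots> = (\<integral>a. (\<integral>y. (t + inner_n (Suc n) (a(n:=y)) z)^2 \<partial>N) \<partial>PiM {..<n} (\<lambda>_. N))"
    by (rule split_PiM(1)[OF gM]) (use int_sq[OF g, of "Suc n" t z] in \<open>auto simp: lessThan_Suc\<close>)
  also have "\<dots> = (\<integral>a. (t + inner_n n a z)^2 + z n^2 \<partial>PiM {..<n} (\<lambda>_. N))"
    by (rule Bochner_Integration.integral_cong[OF refl])
       (simp add: inner_upd add.assoc[symmetric] sq_int(2)[OF g])
  also have "\<dots> = (t^2 + (\<Sum>j<n. z j^2)) + z n^2"
    using int_sq[OF g, of n t z] Suc by (simp add: prob_space)
  finally show ?case by simp
qed

lemma abs_lin:
  assumes g: "good N"
  shows "(\<integral>a. \<bar>t + inner_n n a z\<bar> \<partial>PiM {..<n} (\<lambda>_. N)) \<le> sqrt (1 + t^2 + (\<Sum>j<n. z j^2))"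
proof -
  interpret prob_space "PiM {..<n} (\<lambda>_. N)" by (rule prob_space_PiM) (use g in \<open>simp add: good_def\<close>)
  define q where "q = sqrt (1 + t^2 + (\<Sum>j<n. z j^2))"
  have S0: "0 \<le> (\<Sum>j<n. z j^2)" by (simp add: sum_nonneg)
  have q0: "0 < q" unfolding q_def using S0 by (simp add: add_pos_nonneg)
  have qq: "q^2 = 1 + t^2 + (\<Sum>j<n. z j^2)" unfolding q_def using S0 by simp
  have "(\<integral>a. \<bar>t + inner_n n a z\<bar> \<partial>PiM {..<n} (\<lambda>_. N)) \<le>
        (\<integral>a. ((t + inner_n n a z)^2 + q^2)/(2*q) \<partial>PiM {..<n} (\<lambda>_. N))"
  proof (rule integral_mono[OF int_abs[OF g]])
    show "integrable (PiM {..<n} (\<lambda>_. N)) (\<lambda>a. ((t + inner_n n a z)^2 + q^2)/(2*q))"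
      using int_sq[OF g, of n t z] by auto
    fix a
    have "\<bar>t + inner_n n a z\<bar> = sqrt ((t + inner_n n a z)^2)" by simp
    also have "\<dots> \<le> ((t + inner_n n a z)^2 + q^2)/(2*q)" by (rule sqrt_le[OF _ q0]) simp
    finally show "\<bar>t + inner_n n a z\<bar> \<le> ((t + inner_n n a z)^2 + q^2)/(2*q)" .
  qed
  also have "\<dots> = ((t^2 + (\<Sum>j<n. z j^2)) + q^2)/(2*q)"
    using int_sq[OF g, of n t z] var_lin[OF g, where t=t and n=n and z=z] by (simp add: prob_space)
  also have "\<dots> \<le> q" using q0 qq by (simp add: field_simps power2_eq_square)
  finally show ?thesis unfolding q_def .
qed

lemma jensen_g:
  assumes g: "good N" and S0: "0 \<le> S"
  shows "integrable N (\<lambda>y. sqrt (1 + (t + y*c)^2 + S))"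
    and "(\<integral>y. sqrt (1 + (t + y*c)^2 + S) \<partial>N) \<le> sqrt (1 + t^2 + (S + c^2))"
proof -
  interpret prob_space N using g by (simp add: good_def)
  have sN: "sets N = sets borel" using g by (simp add: good_def)
  have mN: "measurable N borel = measurable borel borel" by (rule measurable_cong_sets[OF sN refl])
  define q where "q = sqrt (1 + t^2 + (S + c^2))"
  have q0: "0 < q" unfolding q_def using S0 by (simp add: add_pos_nonneg)
  have qq: "q^2 = 1 + t^2 + (S + c^2)" unfolding q_def using S0 by simp
  have ib: "integrable N (\<lambda>y. ((1 + (t + y*c)^2 + S) + q^2)/(2*q))"
    using sq_int(1)[OF g, of t c] by auto
  have bnd: "sqrt (1 + (t + y*c)^2 + S) \<le> ((1 + (t + y*c)^2 + S) + q^2)/(2*q)" for y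
    by (rule sqrt_le[OF _ q0]) (use S0 in simp)
  have m: "(\<lambda>y. sqrt (1 + (t + y*c)^2 + S)) \<in> borel_measurable N" unfolding mN by measurable
  show i: "integrable N (\<lambda>y. sqrt (1 + (t + y*c)^2 + S))"
    by (rule Bochner_Integration.integrable_bound[OF ib m], intro AE_I2)
       (use bnd S0 q0 in \<open>auto intro: order.trans[OF _ bnd]\<close>)
  have "(\<integral>y. sqrt (1 + (t + y*c)^2 + S) \<partial>N) \<le> (\<integral>y. ((1 + (t + y*c)^2 + S) + q^2)/(2*q) \<partial>N)"
    by (rule integral_mono[OF i ib bnd])
  also have "\<dots> = ((1 + (t^2 + c^2) + S) + q^2)/(2*q)"
    using sq_int[OF g, of t c] by (simp add: prob_space)
  also have "\<dots> \<le> q" using q0 qq by (simp add: field_simps power2_eq_square)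
  finally show "(\<integral>y. sqrt (1 + (t + y*c)^2 + S) \<partial>N) \<le> sqrt (1 + t^2 + (S + c^2))" unfolding q_def .
qed



context th begin

lemma decomp:
  fixes M :: "nat \<Rightarrow> real measure"
  assumes gM: "\<And>i. good (M i)"
  shows "(\<integral>a. \<theta>(s + inner_n (Suc n) a x) * (t + inner_n (Suc n) a z) \<partial>PiM {..<Suc n} M)
        = (\<integral>a. (\<integral>y. \<theta>((s + inner_n n a x) + y * x n) * ((t + inner_n n a z) + y * z n) \<partial>M n) \<partial>PiM {..<n} M)"
    and "(\<integral>a. \<theta>(s + inner_n (Suc n) a x) * (t + inner_n (Suc n) a z) \<partial>PiM {..<Suc n} M)
        = (\<integral>y. (\<integral>a. \<theta>((s + y * x n) + inner_n n a x) * ((t + y * z n) + inner_n n a z) \<partial>PiM {..<n} M) \<partial>M n)"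
    and "integrable (PiM {..<n} M) (\<lambda>a. \<integral>y. \<theta>((s + inner_n n a x) + y * x n) * ((t + inner_n n a z) + y * z n) \<partial>M n)"
    and "integrable (M n) (\<lambda>y. \<integral>a. \<theta>((s + y * x n) + inner_n n a x) * ((t + y * z n) + inner_n n a z) \<partial>PiM {..<n} M)"
proof -
  let ?f = "\<lambda>a. \<theta>(s + inner_n (Suc n) a x) * (t + inner_n (Suc n) a z)"
  have eqf: "?f = (\<lambda>a. \<theta>(s + (\<Sum>i\<in>insert n {..<n}. a i * x i)) * (t + (\<Sum>i\<in>insert n {..<n}. a i * z i)))"
    by (simp add: inner_n_def lessThan_Suc)
  have int: "integrable (PiM (insert n {..<n}) M) ?f"
    unfolding eqf by (rule int_h) (use gM in auto)
  have e1: "(\<lambda>a. \<integral>y. ?f (a(n:=y)) \<partial>M n) = (\<lambda>a. \<integral>y. \<theta>((s + inner_n n a x) + y * x n) * ((t + inner_n n a z) + y * z n) \<partial>M n)"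
    by (simp add: inner_upd add.assoc)
  have e2: "(\<lambda>y. \<integral>a. ?f (a(n:=y)) \<partial>PiM {..<n} M) = (\<lambda>y. \<integral>a. \<theta>((s + y * x n) + inner_n n a x) * ((t + y * z n) + inner_n n a z) \<partial>PiM {..<n} M)"
    by (simp add: inner_upd add_ac)
  note sp = split_PiM[OF gM _ _ int, simplified]
  show "(\<integral>a. ?f a \<partial>PiM {..<Suc n} M)
        = (\<integral>a. (\<integral>y. \<theta>((s + inner_n n a x) + y * x n) * ((t + inner_n n a z) + y * z n) \<partial>M n) \<partial>PiM {..<n} M)"
    using sp(1) e1 by (simp add: lessThan_Suc)
  show "(\<integral>a. ?f a \<partial>PiM {..<Suc n} M)
        = (\<integral>y. (\<integral>a. \<theta>((s + y * x n) + inner_n n a x) * ((t + y * z n) + inner_n n a z) \<partial>PiM {..<n} M) \<partial>M n)"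
    using sp(2) e2 by (simp add: lessThan_Suc)
  show "integrable (PiM {..<n} M) (\<lambda>a. \<integral>y. \<theta>((s + inner_n n a x) + y * x n) * ((t + inner_n n a z) + y * z n) \<partial>M n)"
    using sp(3) e1 by simp
  show "integrable (M n) (\<lambda>y. \<integral>a. \<theta>((s + y * x n) + inner_n n a x) * ((t + y * z n) + inner_n n a z) \<partial>PiM {..<n} M)"
    using sp(4) e2 by simp
qed


definition FF :: "real measure \<Rightarrow> nat \<Rightarrow> (nat \<Rightarrow> real) \<Rightarrow> (nat \<Rightarrow> real) \<Rightarrow> real \<Rightarrow> real \<Rightarrow> real" where
  "FF N n x z s t = (\<integral>a. \<theta>(s + inner_n n a x) * (t + inner_n n a z) \<partial>PiM {..<n} (\<lambda>_. N))"

lemma abs_int_le: "integrable M f \<Longrightarrow> integrable M g \<Longrightarrow> (\<And>a. \<bar>f a\<bar> \<le> g a) \<Longrightarrow> \<bar>\<integral>a. f a \<partial>M\<bar> \<le> (\<integral>a. g a \<partial>M)"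
  for f g :: "'a \<Rightarrow> real"
proof -
  assume f: "integrable M f" and g: "integrable M g" and b: "\<And>a. \<bar>f a\<bar> \<le> g a"
  have "\<bar>\<integral>a. f a \<partial>M\<bar> \<le> (\<integral>a. \<bar>f a\<bar> \<partial>M)" by (rule integral_abs_bound)
  also have "\<dots> \<le> (\<integral>a. g a \<partial>M)" by (rule integral_mono[OF integrable_abs[OF f] g b])
  finally show ?thesis .
qed

lemma main_ind:
  assumes gD: "good D" and gG: "good G"
  defines "m \<equiv> (\<integral>u. \<bar>u\<bar>^3 \<partial>D) + (\<integral>u. \<bar>u\<bar>^3 \<partial>G)"
  shows "\<bar>FF D n x z s t - FF G n x z s t\<bar> \<le>
     (\<Sum>k<n. m*\<tau>3/6*\<bar>x k\<bar>^3 * sqrt (1 + t^2 + (\<Sum>j<n. z j^2)) + m*\<tau>2/2*x k^2*\<bar>z k\<bar>)"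
proof (induction n arbitrary: s t)
  case 0
  have "FF N 0 x z s t = \<theta> s * t" if "good N" for N
  proof -
    interpret prob_space "PiM {} (\<lambda>_. N)" by (rule prob_space_PiM) (use that in \<open>simp add: good_def\<close>)
    show ?thesis by (simp add: FF_def inner_n_def prob_space)
  qed
  then show ?case using gD gG by simp
next
  case (Suc n)
  have m0: "0 \<le> m" unfolding m_def by (intro add_nonneg_nonneg integral_nonneg) auto
  define S where "S = (\<Sum>j<n. z j^2)"
  have S0: "0 \<le> S" unfolding S_def by (simp add: sum_nonneg)
  define hyb where "hyb = (\<lambda>i. if i < n then D else G)"
  have ghyb: "\<And>i. good (hyb i)" using gD gG by (simp add: hyb_def)
  have gDc: "\<And>i. good ((\<lambda>_. D) i)" and gGc: "\<And>i. good ((\<lambda>_. G) i)" using gD gG by auto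
  have Phyb: "PiM {..<n} hyb = PiM {..<n} (\<lambda>_. D)" by (rule PiM_cong) (auto simp: hyb_def)
  have hybn: "hyb n = G" by (simp add: hyb_def)
  define \<Phi> where "\<Phi> = (\<lambda>N a. (\<integral>y. \<theta>((s + inner_n n a x) + y * x n) * ((t + inner_n n a z) + y * z n) \<partial>N))"
  define \<Psi> where "\<Psi> = (\<lambda>N y. FF N n x z (s + y * x n) (t + y * z n))"
  define Hy where "Hy = (\<integral>a. \<theta>(s + inner_n (Suc n) a x) * (t + inner_n (Suc n) a z) \<partial>PiM {..<Suc n} hyb)"
  have FD: "FF D (Suc n) x z s t = (\<integral>a. \<Phi> D a \<partial>PiM {..<n} (\<lambda>_. D))"
    using decomp(1)[OF gDc, where s=s and n=n and x=x and t=t and z=z] by (simp add: FF_def \<Phi>_def)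
  have FG: "FF G (Suc n) x z s t = (\<integral>y. \<Psi> G y \<partial>G)"
    using decomp(2)[OF gGc, where s=s and n=n and x=x and t=t and z=z] by (simp add: FF_def \<Psi>_def)
  have H1: "Hy = (\<integral>a. \<Phi> G a \<partial>PiM {..<n} (\<lambda>_. D))"
    using decomp(1)[where M=hyb, OF ghyb, where s=s and n=n and x=x and t=t and z=z] by (simp add: Hy_def \<Phi>_def Phyb hybn)
  have H2: "Hy = (\<integral>y. \<Psi> D y \<partial>G)"
    using decomp(2)[where M=hyb, OF ghyb, where s=s and n=n and x=x and t=t and z=z] by (simp add: Hy_def \<Psi>_def Phyb hybn FF_def)
  have iPD: "integrable (PiM {..<n} (\<lambda>_. D)) (\<Phi> D)"
    using decomp(3)[OF gDc, where s=s and n=n and x=x and t=t and z=z] by (simp add: \<Phi>_def)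
  have iPG: "integrable (PiM {..<n} (\<lambda>_. D)) (\<Phi> G)"
    using decomp(3)[where M=hyb, OF ghyb, where s=s and n=n and x=x and t=t and z=z] by (simp add: \<Phi>_def Phyb hybn)
  have iSD: "integrable G (\<Psi> D)"
    using decomp(4)[where M=hyb, OF ghyb, where s=s and n=n and x=x and t=t and z=z] by (simp add: \<Psi>_def Phyb hybn FF_def)
  have iSG: "integrable G (\<Psi> G)"
    using decomp(4)[OF gGc, where s=s and n=n and x=x and t=t and z=z] by (simp add: \<Psi>_def FF_def)
  have pw1: "\<bar>\<Phi> D a - \<Phi> G a\<bar> \<le> m*(\<bar>t + inner_n n a z\<bar>*\<tau>3*\<bar>x n\<bar>^3/6 + \<bar>z n\<bar>*\<tau>2*x n^2/2)" for a
  proof -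
    define Q where "Q = (t + inner_n n a z)*\<theta> (s + inner_n n a x) + (t + inner_n n a z)*\<theta>2 (s + inner_n n a x)*x n^2/2 + z n*\<theta>1 (s + inner_n n a x)*x n"
    define K where "K = \<bar>t + inner_n n a z\<bar>*\<tau>3*\<bar>x n\<bar>^3/6 + \<bar>z n\<bar>*\<tau>2*x n^2/2"
    have a1: "\<bar>\<Phi> D a - Q\<bar> \<le> (\<integral>u. \<bar>u\<bar>^3 \<partial>D) * K"
      using onedim(2)[OF gD, where s="s + inner_n n a x" and x="x n" and t="t + inner_n n a z" and z="z n"]
      unfolding \<Phi>_def Q_def K_def by simp
    have a2: "\<bar>\<Phi> G a - Q\<bar> \<le> (\<integral>u. \<bar>u\<bar>^3 \<partial>G) * K"
      using onedim(2)[OF gG, where s="s + inner_n n a x" and x="x n" and t="t + inner_n n a z" and z="z n"]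
      unfolding \<Phi>_def Q_def K_def by simp
    have "\<bar>\<Phi> D a - \<Phi> G a\<bar> \<le> (\<integral>u. \<bar>u\<bar>^3 \<partial>D) * K + (\<integral>u. \<bar>u\<bar>^3 \<partial>G) * K"
      using a1 a2 by linarith
    also have "\<dots> = m * K" by (simp add: m_def algebra_simps)
    finally show ?thesis unfolding K_def .
  qed
  have t1: "\<bar>(\<integral>a. \<Phi> D a \<partial>PiM {..<n} (\<lambda>_. D)) - (\<integral>a. \<Phi> G a \<partial>PiM {..<n} (\<lambda>_. D))\<bar>
      \<le> m*\<tau>3/6*\<bar>x n\<bar>^3 * sqrt (1 + t^2 + S) + m*\<tau>2/2*x n^2*\<bar>z n\<bar>"
  proof -
    interpret PD: prob_space "PiM {..<n} (\<lambda>_. D)" by (rule prob_space_PiM) (use gD in \<open>simp add: good_def\<close>)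
    have ia: "integrable (PiM {..<n} (\<lambda>_. D)) (\<lambda>a. \<bar>t + inner_n n a z\<bar>)" by (rule int_abs[OF gD])
    have "\<bar>(\<integral>a. \<Phi> D a \<partial>PiM {..<n} (\<lambda>_. D)) - (\<integral>a. \<Phi> G a \<partial>PiM {..<n} (\<lambda>_. D))\<bar>
        = \<bar>\<integral>a. \<Phi> D a - \<Phi> G a \<partial>PiM {..<n} (\<lambda>_. D)\<bar>"
      by (simp only: Bochner_Integration.integral_diff[OF iPD iPG])
    also have "\<dots> \<le> (\<integral>a. m*(\<bar>t + inner_n n a z\<bar>*\<tau>3*\<bar>x n\<bar>^3/6 + \<bar>z n\<bar>*\<tau>2*x n^2/2) \<partial>PiM {..<n} (\<lambda>_. D))"
      by (rule abs_int_le[OF Bochner_Integration.integrable_diff[OF iPD iPG] _ pw1]) (use ia in simp)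
    also have "\<dots> = m*\<tau>3/6*\<bar>x n\<bar>^3 * (\<integral>a. \<bar>t + inner_n n a z\<bar> \<partial>PiM {..<n} (\<lambda>_. D)) + m*\<tau>2/2*x n^2*\<bar>z n\<bar>"
      using ia by (simp add: algebra_simps PD.prob_space)
    also have "\<dots> \<le> m*\<tau>3/6*\<bar>x n\<bar>^3 * sqrt (1 + t^2 + S) + m*\<tau>2/2*x n^2*\<bar>z n\<bar>"
      using abs_lin[OF gD, where t=t and n=n and z=z] m0 tau_nonneg unfolding S_def
      by (intro add_right_mono mult_left_mono) auto
    finally show ?thesis .
  qed
  define B where "B y = (\<Sum>k<n. m*\<tau>3/6*\<bar>x k\<bar>^3 * sqrt (1 + (t + y * z n)^2 + S) + m*\<tau>2/2*x k^2*\<bar>z k\<bar>)" for y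
  have pw2: "\<bar>\<Psi> D y - \<Psi> G y\<bar> \<le> B y" for y
    using Suc.IH[where s="s + y * x n" and t="t + y * z n"] unfolding \<Psi>_def B_def S_def .
  have isq: "integrable G (\<lambda>y. sqrt (1 + (t + y * z n)^2 + S))" by (rule jensen_g(1)[OF gG S0])
  interpret PG: prob_space G using gG by (simp add: good_def)
  have iB: "integrable G B" unfolding B_def
    by (intro Bochner_Integration.integrable_sum Bochner_Integration.integrable_add integrable_mult_right isq PG.integrable_const)
  have t2: "\<bar>(\<integral>y. \<Psi> D y \<partial>G) - (\<integral>y. \<Psi> G y \<partial>G)\<bar>
      \<le> (\<Sum>k<n. m*\<tau>3/6*\<bar>x k\<bar>^3 * sqrt (1 + t^2 + (S + z n^2)) + m*\<tau>2/2*x k^2*\<bar>z k\<bar>)"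
  proof -
    have "\<bar>(\<integral>y. \<Psi> D y \<partial>G) - (\<integral>y. \<Psi> G y \<partial>G)\<bar> = \<bar>\<integral>y. \<Psi> D y - \<Psi> G y \<partial>G\<bar>"
      by (simp only: Bochner_Integration.integral_diff[OF iSD iSG])
    also have "\<dots> \<le> (\<integral>y. B y \<partial>G)"
      by (rule abs_int_le[OF Bochner_Integration.integrable_diff[OF iSD iSG] iB pw2])
    also have "\<dots> = (\<Sum>k<n. m*\<tau>3/6*\<bar>x k\<bar>^3 * (\<integral>y. sqrt (1 + (t + y * z n)^2 + S) \<partial>G) + m*\<tau>2/2*x k^2*\<bar>z k\<bar>)"
      unfolding B_def using isq by (simp add: PG.prob_space)
    also have "\<dots> \<le> (\<Sum>k<n. m*\<tau>3/6*\<bar>x k\<bar>^3 * sqrt (1 + t^2 + (S + z n^2)) + m*\<tau>2/2*x k^2*\<bar>z k\<bar>)"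
      using jensen_g(2)[OF gG S0, where t=t and c="z n"] m0 tau_nonneg
      by (intro sum_mono add_right_mono mult_left_mono) auto
    finally show ?thesis .
  qed
  have S1: "(\<Sum>j<Suc n. z j^2) = S + z n^2" by (simp add: S_def)
  have mono: "sqrt (1 + t^2 + S) \<le> sqrt (1 + t^2 + (S + z n^2))" by simp
  have "\<bar>FF D (Suc n) x z s t - FF G (Suc n) x z s t\<bar>
     \<le> \<bar>(\<integral>a. \<Phi> D a \<partial>PiM {..<n} (\<lambda>_. D)) - (\<integral>a. \<Phi> G a \<partial>PiM {..<n} (\<lambda>_. D))\<bar>
       + \<bar>(\<integral>y. \<Psi> D y \<partial>G) - (\<integral>y. \<Psi> G y \<partial>G)\<bar>"
    unfolding FD FG using H1 H2 by linarith
  also have "\<dots> \<le> (m*\<tau>3/6*\<bar>x n\<bar>^3 * sqrt (1 + t^2 + (S + z n^2)) + m*\<tau>2/2*x n^2*\<bar>z n\<bar>)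
      + (\<Sum>k<n. m*\<tau>3/6*\<bar>x k\<bar>^3 * sqrt (1 + t^2 + (S + z n^2)) + m*\<tau>2/2*x k^2*\<bar>z k\<bar>)"
  proof -
    have "m*\<tau>3/6*\<bar>x n\<bar>^3 * sqrt (1 + t^2 + S) \<le> m*\<tau>3/6*\<bar>x n\<bar>^3 * sqrt (1 + t^2 + (S + z n^2))"
      using m0 tau_nonneg by (intro mult_left_mono[OF mono]) auto
    then show ?thesis using t1 t2 by linarith
  qed
  also have "\<dots> = (\<Sum>k<Suc n. m*\<tau>3/6*\<bar>x k\<bar>^3 * sqrt (1 + t^2 + (\<Sum>j<Suc n. z j^2)) + m*\<tau>2/2*x k^2*\<bar>z k\<bar>)"
    unfolding S1 by (subst sum.lessThan_Suc) (rule add.commute)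
  finally show ?case .
qed

end



lemma abs_powr_nat: "0 < k \<Longrightarrow> \<bar>t::real\<bar> powr (real k) = \<bar>t\<bar>^k"
  by (cases "t = 0") (simp_all add: powr_realpow)

lemma good_D:
  assumes "prob_space D" "sets D = sets borel" "integrable D (\<lambda>t. t)" "(\<integral>t. t \<partial>D) = 0"
    "integrable D (\<lambda>t. t^2)" "(\<integral>t. t^2 \<partial>D) = 1" "subgaussian_norm_le D \<kappa>"
  shows "good D" and "integrable D (\<lambda>t. t^4)"
proof -
  have "integrable D (\<lambda>t. \<bar>t\<bar> powr (real 3))" using assms(7) unfolding subgaussian_norm_le_def
    by (metis of_nat_numeral one_le_numeral)
  then have i3: "integrable D (\<lambda>t. \<bar>t\<bar>^3)" by (simp only: abs_powr_nat[of 3])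
  have "integrable D (\<lambda>t. \<bar>t\<bar> powr (real 4))" using assms(7) unfolding subgaussian_norm_le_def
    by (metis of_nat_numeral one_le_numeral)
  then have "integrable D (\<lambda>t. \<bar>t\<bar>^4)" by (simp only: abs_powr_nat[of 4])
  moreover have "(\<lambda>t::real. \<bar>t\<bar>^4) = (\<lambda>t. t^4)" by (simp add: fun_eq_iff power_even_abs)
  ultimately show "integrable D (\<lambda>t. t^4)" by simp
  show "good D" using assms i3 by (simp add: good_def)
qed


lemma final:
  fixes n :: nat and x z :: "nat \<Rightarrow> real" and D :: "real measure" and \<kappa> :: real
    and \<theta> \<theta>1 \<theta>2 \<theta>3 :: "real \<Rightarrow> real" and \<tau>2 \<tau>3 :: real
  assumes x1: "(\<Sum>i<n. (x i)\<^sup>2) \<le> 1" and z1: "(\<Sum>i<n. (z i)\<^sup>2) \<le> 1"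
    and D: "prob_space D" "sets D = sets borel" "integrable D (\<lambda>t. t)" "(\<integral>t. t \<partial>D) = 0"
    "integrable D (\<lambda>t. t\<^sup>2)" "(\<integral>t. t\<^sup>2 \<partial>D) = 1" "subgaussian_norm_le D \<kappa>"
    and th: "\<theta> \<in> borel_measurable borel"
    "\<forall>t. (\<theta> has_real_derivative \<theta>1 t) (at t)"
    "\<forall>t. (\<theta>1 has_real_derivative \<theta>2 t) (at t)"
    "\<forall>t. (\<theta>2 has_real_derivative \<theta>3 t) (at t)"
    "\<forall>t. \<bar>\<theta>2 t\<bar> \<le> \<tau>2" "\<forall>t. \<bar>\<theta>3 t\<bar> \<le> \<tau>3"
  shows "\<bar>(\<integral>a. \<theta> (inner_n n a x) * inner_n n a z \<partial>(PiM {..<n} (\<lambda>_. D)))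
      - (\<integral>g. \<theta> (inner_n n g x) * inner_n n g z \<partial>(PiM {..<n} (\<lambda>_. std_gaussian)))\<bar>
     \<le> 2 * (\<tau>2 + \<tau>3) * (\<integral>t. t ^ 4 \<partial>D) * linf_norm n x"
proof -
  interpret T: th \<theta> \<theta>1 \<theta>2 \<theta>3 \<tau>2 \<tau>3
    by (unfold_locales; (rule th(1) | rule th(2)[rule_format] | rule th(3)[rule_format] | rule th(4)[rule_format] | rule th(5)[rule_format] | rule th(6)[rule_format]))
  have gD: "good D" and i4: "integrable D (\<lambda>t. t^4)" using good_D[OF D] by auto
  have gG: "good std_gaussian" by (rule gauss_good)
  interpret PD: prob_space D using D by simp
  define m4 where "m4 = (\<integral>t. t ^ 4 \<partial>D)"
  define m where "m = (\<integral>u. \<bar>u\<bar>^3 \<partial>D) + (\<integral>u. \<bar>u\<bar>^3 \<partial>std_gaussian)"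
  define L where "L = linf_norm n x"
  have t0: "0 \<le> \<tau>2" "0 \<le> \<tau>3" by (rule T.tau_nonneg)+
  have i3: "integrable D (\<lambda>u. \<bar>u\<bar>^3)" using gD by (simp add: good_def)
  have m41: "1 \<le> m4"
  proof -
    have "(\<integral>t. 2*t^2 - 1 \<partial>D) \<le> (\<integral>t. t^4 \<partial>D)"
    proof (rule integral_mono)
      show "integrable D (\<lambda>t. 2*t^2 - 1)" using D by auto
      show "integrable D (\<lambda>t. t^4)" by (rule i4)
      fix t :: real
      have "0 \<le> (t^2 - 1)^2" by simp
      then show "2*t^2 - 1 \<le> t^4" by (simp add: power2_eq_square power4_eq_xxxx algebra_simps)
    qed
    then show ?thesis using D by (simp add: m4_def PD.prob_space)
  qed
  have c3D: "(\<integral>u. \<bar>u\<bar>^3 \<partial>D) \<le> m4"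
  proof -
    have "(\<integral>u. \<bar>u\<bar>^3 \<partial>D) \<le> (\<integral>u. (u^2 + u^4)/2 \<partial>D)"
    proof (rule integral_mono[OF i3])
      show "integrable D (\<lambda>u. (u^2 + u^4)/2)" using D i4 by auto
      fix u :: real
      have "0 \<le> \<bar>u\<bar>^2 * (\<bar>u\<bar> - 1)^2" by simp
      then show "\<bar>u\<bar>^3 \<le> (u^2 + u^4)/2"
        by (simp add: power2_eq_square power3_eq_cube power4_eq_xxxx algebra_simps)
    qed
    also have "\<dots> = (1 + m4)/2" using D i4 by (simp add: m4_def)
    finally show ?thesis using m41 by simp
  qed
  have m3: "m \<le> 3 * m4" using c3D gauss_abs3 m41 unfolding m_def by linarith
  have L0: "0 \<le> L" unfolding L_def linf_norm_def by (rule Max_ge) auto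
  have xL: "\<bar>x k\<bar> \<le> L" if "k < n" for k
    unfolding L_def linf_norm_def by (rule Max_ge) (use that in auto)
  have sx: "(\<Sum>k<n. \<bar>x k\<bar>^3) \<le> L"
  proof -
    have "(\<Sum>k<n. \<bar>x k\<bar>^3) \<le> (\<Sum>k<n. L * (x k)^2)"
    proof (rule sum_mono)
      fix k assume "k \<in> {..<n}"
      then have "\<bar>x k\<bar> * (x k)^2 \<le> L * (x k)^2" using xL by (intro mult_right_mono) auto
      then show "\<bar>x k\<bar>^3 \<le> L * (x k)^2" by (simp add: power3_eq_cube power2_eq_square)
    qed
    also have "\<dots> = L * (\<Sum>k<n. (x k)^2)" by (simp add: sum_distrib_left)
    also have "\<dots> \<le> L" using x1 L0 by (simp add: mult_left_le)
    finally show ?thesis .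
  qed
  have sxz: "(\<Sum>k<n. (x k)^2 * \<bar>z k\<bar>) \<le> L"
  proof -
    have "(\<Sum>k<n. (x k)^2 * \<bar>z k\<bar>) \<le> (\<Sum>k<n. L * (((x k)^2 + (z k)^2)/2))"
    proof (rule sum_mono)
      fix k assume "k \<in> {..<n}"
      then have xk: "\<bar>x k\<bar> \<le> L" using xL by auto
      have a: "\<bar>x k\<bar> * \<bar>z k\<bar> \<le> ((x k)^2 + (z k)^2)/2"
      proof -
        have "0 \<le> (\<bar>x k\<bar> - \<bar>z k\<bar>)^2" by simp
        then show ?thesis by (simp add: power2_eq_square algebra_simps)
      qed
      have "(x k)^2 * \<bar>z k\<bar> = \<bar>x k\<bar> * (\<bar>x k\<bar> * \<bar>z k\<bar>)" by (simp add: power2_eq_square)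
      also have "\<dots> \<le> L * (\<bar>x k\<bar> * \<bar>z k\<bar>)" by (rule mult_right_mono[OF xk]) simp
      also have "\<dots> \<le> L * (((x k)^2 + (z k)^2)/2)" by (rule mult_left_mono[OF a L0])
      finally show "(x k)^2 * \<bar>z k\<bar> \<le> L * (((x k)^2 + (z k)^2)/2)" .
    qed
    also have "\<dots> = (L/2) * (\<Sum>k<n. (x k)^2) + (L/2) * (\<Sum>k<n. (z k)^2)"
      by (simp add: sum_distrib_left sum.distrib[symmetric] add_divide_distrib algebra_simps)
    also have "\<dots> \<le> (L/2) * 1 + (L/2) * 1" using x1 z1 L0 by (intro add_mono mult_left_mono) auto
    finally show ?thesis by simp
  qed
  have sq: "sqrt (1 + 0^2 + (\<Sum>j<n. (z j)^2)) \<le> 3/2"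
  proof -
    have "sqrt (1 + 0^2 + (\<Sum>j<n. (z j)^2)) \<le> ((1 + 0^2 + (\<Sum>j<n. (z j)^2)) + (3/2)^2)/(2*(3/2))"
      by (rule sqrt_le) (simp_all add: add_nonneg_nonneg sum_nonneg)
    also have "\<dots> \<le> 3/2" using z1 by (simp add: field_simps)
    finally show ?thesis .
  qed
  have main: "\<bar>T.FF D n x z 0 0 - T.FF std_gaussian n x z 0 0\<bar> \<le>
     (\<Sum>k<n. m*\<tau>3/6*\<bar>x k\<bar>^3 * sqrt (1 + 0^2 + (\<Sum>j<n. z j^2)) + m*\<tau>2/2*x k^2*\<bar>z k\<bar>)"
    unfolding m_def by (rule T.main_ind[OF gD gG])
  have zs0: "0 \<le> (\<Sum>j<n. (z j)^2)" by (simp add: sum_nonneg)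
  have m0: "0 \<le> m" unfolding m_def by (intro add_nonneg_nonneg integral_nonneg) auto
  have "(\<Sum>k<n. m*\<tau>3/6*\<bar>x k\<bar>^3 * sqrt (1 + 0^2 + (\<Sum>j<n. z j^2)) + m*\<tau>2/2*x k^2*\<bar>z k\<bar>)
     = m*\<tau>3/6* sqrt (1 + 0^2 + (\<Sum>j<n. z j^2)) * (\<Sum>k<n. \<bar>x k\<bar>^3) + m*\<tau>2/2*(\<Sum>k<n. x k^2*\<bar>z k\<bar>)"
    by (simp add: sum.distrib sum_distrib_left sum_distrib_right algebra_simps)
  also have "\<dots> \<le> m*\<tau>3/6*(3/2) * L + m*\<tau>2/2*L"
  proof (intro add_mono mult_mono)
  qed (use m0 t0 sq sx sxz L0 zs0 in \<open>auto intro: sum_nonneg\<close>)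
  also have "\<dots> = m * L * (\<tau>3/4 + \<tau>2/2)" by (simp add: algebra_simps)
  also have "\<dots> \<le> (3*m4) * L * (\<tau>3/4 + \<tau>2/2)"
    using m3 L0 t0 by (intro mult_right_mono) auto
  also have "\<dots> \<le> 2 * (\<tau>2 + \<tau>3) * m4 * L"
  proof -
    have "0 \<le> m4 * L" using m41 L0 by simp
    then have "(3*m4) * L * (\<tau>3/4 + \<tau>2/2) = (m4*L) * (3/4*\<tau>3 + 3/2*\<tau>2)" by (simp add: algebra_simps)
    also have "\<dots> \<le> (m4*L) * (2*(\<tau>2+\<tau>3))" using t0 \<open>0 \<le> m4*L\<close> by (intro mult_left_mono) auto
    finally show ?thesis by (simp add: algebra_simps)
  qed
  finally have "\<bar>T.FF D n x z 0 0 - T.FF std_gaussian n x z 0 0\<bar> \<le> 2 * (\<tau>2 + \<tau>3) * m4 * L"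
    using main by linarith
  then show ?thesis by (simp add: T.FF_def m4_def L_def)
qed


theorem lemma3p1:
  "\<exists>C>0. \<forall>(n::nat) (x::nat \<Rightarrow> real) (z::nat \<Rightarrow> real) (D::real measure) (\<kappa>::real)
      (\<theta>::real \<Rightarrow> real) \<theta>1 \<theta>2 \<theta>3 (\<tau>2::real) (\<tau>3::real).
     (\<Sum>i<n. (x i)\<^sup>2) \<le> 1 \<longrightarrow>
     (\<Sum>i<n. (z i)\<^sup>2) \<le> 1 \<longrightarrow>
     prob_space D \<longrightarrow> sets D = sets borel \<longrightarrow>
     integrable D (\<lambda>t. t) \<longrightarrow> (\<integral>t. t \<partial>D) = 0 \<longrightarrow>
     integrable D (\<lambda>t. t\<^sup>2) \<longrightarrow> (\<integral>t. t\<^sup>2 \<partial>D) = 1 \<longrightarrow>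
     subgaussian_norm_le D \<kappa> \<longrightarrow>
     \<theta> \<in> borel_measurable borel \<longrightarrow>
     (\<forall>t. (\<theta> has_real_derivative \<theta>1 t) (at t)) \<longrightarrow>
     (\<forall>t. (\<theta>1 has_real_derivative \<theta>2 t) (at t)) \<longrightarrow>
     (\<forall>t. (\<theta>2 has_real_derivative \<theta>3 t) (at t)) \<longrightarrow>
     (\<forall>t. \<bar>\<theta>2 t\<bar> \<le> \<tau>2) \<longrightarrow>
     (\<forall>t. \<bar>\<theta>3 t\<bar> \<le> \<tau>3) \<longrightarrow>
     \<bar>(\<integral>a. \<theta> (inner_n n a x) * inner_n n a z \<partial>(PiM {..<n} (\<lambda>_. D)))
      - (\<integral>g. \<theta> (inner_n n g x) * inner_n n g z \<partial>(PiM {..<n} (\<lambda>_. std_gaussian)))\<bar>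
     \<le> C * (\<tau>2 + \<tau>3) * (\<integral>t. t ^ 4 \<partial>D) * linf_norm n x"
  apply (rule exI[of _ 2])
  apply (intro conjI allI impI)
   apply simp
  apply (rule final; assumption)
  done

end
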